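(* For every $Z\in\mathfrak m$, the endomorphisms $\mathrm{ad}_{JZ}^2$ and $\mathrm{ad}_Z^2$ of $\mathfrak m$ commute.
   Context: $\mathfrak g$ is a complex simple Lie algebra with a decomposition $\mathfrak g=\mathfrak k\oplus\mathfrak m$ into the $\pm1$-eigenspaces of an involutive automorphism, arising from an irreducible Hermitian symmetric space: there is $\Upsilon$ in the center of $\mathfrak k$ such that $\mathrm{ad}_\Upsilon$ has eigenvalues $\pm i$ on $\mathfrak m$, with eigenspaces $\mathfrak m^\pm$ (so $[\mathfrak k,\mathfrak m^\pm]\subseteq\mathfrak m^\pm$, $[\mathfrak m^+,\mathfrak m^+]=[\mathfrak m^-,\mathfrak m^-]=0$, $[\mathfrak m,\mathfrak m]\subseteq\mathfrak k$). $J=\mathrm{ad}_\Upsilon|_{\mathfrak m}$. Note $\mathrm{ad}_Z^2$ maps $\mathfrak m$ into $\mathfrak m$ for $Z\in\mathfrak m$. *)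

theory Defs
  imports Complex_Main
begin

definition complex_lie_algebra ::
  "(complex \<Rightarrow> 'g::ab_group_add \<Rightarrow> 'g) \<Rightarrow> ('g \<Rightarrow> 'g \<Rightarrow> 'g) \<Rightarrow> bool" where
  "complex_lie_algebra sc br \<longleftrightarrow>
     vector_space sc \<and>
     (\<forall>x. Vector_Spaces.linear sc sc (br x)) \<and>
     (\<forall>y. Vector_Spaces.linear sc sc (\<lambda>x. br x y)) \<and>
     (\<forall>x. br x x = 0) \<and>
     (\<forall>x y z. br x (br y z) + br y (br z x) + br z (br x y) = 0)"

definition lie_ideal ::
  "(complex \<Rightarrow> 'g::ab_group_add \<Rightarrow> 'g) \<Rightarrow> ('g \<Rightarrow> 'g \<Rightarrow> 'g) \<Rightarrow> 'g set \<Rightarrow> bool" where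
  "lie_ideal sc br I \<longleftrightarrow> module.subspace sc I \<and> (\<forall>x y. y \<in> I \<longrightarrow> br x y \<in> I)"

definition complex_simple_lie_algebra ::
  "(complex \<Rightarrow> 'g::ab_group_add \<Rightarrow> 'g) \<Rightarrow> ('g \<Rightarrow> 'g \<Rightarrow> 'g) \<Rightarrow> bool" where
  "complex_simple_lie_algebra sc br \<longleftrightarrow>
     complex_lie_algebra sc br \<and>
     (\<exists>B. finite B \<and> module.span sc B = UNIV) \<and>
     (\<exists>x y. br x y \<noteq> 0) \<and>
     (\<forall>I. lie_ideal sc br I \<longrightarrow> I = {0} \<or> I = UNIV)"

definition involutive_automorphism ::
  "(complex \<Rightarrow> 'g::ab_group_add \<Rightarrow> 'g) \<Rightarrow> ('g \<Rightarrow> 'g \<Rightarrow> 'g) \<Rightarrow> ('g \<Rightarrow> 'g) \<Rightarrow> bool" where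
  "involutive_automorphism sc br \<theta> \<longleftrightarrow>
     Vector_Spaces.linear sc sc \<theta> \<and>
     (\<forall>x y. \<theta> (br x y) = br (\<theta> x) (\<theta> y)) \<and>
     (\<forall>x. \<theta> (\<theta> x) = x)"

definition kpart :: "('g::ab_group_add \<Rightarrow> 'g) \<Rightarrow> 'g set" where
  "kpart \<theta> = {x. \<theta> x = x}"

definition mpart :: "('g::ab_group_add \<Rightarrow> 'g) \<Rightarrow> 'g set" where
  "mpart \<theta> = {x. \<theta> x = - x}"

definition mplus ::
  "(complex \<Rightarrow> 'g::ab_group_add \<Rightarrow> 'g) \<Rightarrow> ('g \<Rightarrow> 'g \<Rightarrow> 'g) \<Rightarrow> ('g \<Rightarrow> 'g) \<Rightarrow> 'g \<Rightarrow> 'g set" where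
  "mplus sc br \<theta> U = {X \<in> mpart \<theta>. br U X = sc \<i> X}"

definition mminus ::
  "(complex \<Rightarrow> 'g::ab_group_add \<Rightarrow> 'g) \<Rightarrow> ('g \<Rightarrow> 'g \<Rightarrow> 'g) \<Rightarrow> ('g \<Rightarrow> 'g) \<Rightarrow> 'g \<Rightarrow> 'g set" where
  "mminus sc br \<theta> U = {X \<in> mpart \<theta>. br U X = sc (- \<i>) X}"

definition hermitian_symmetric_data ::
  "(complex \<Rightarrow> 'g::ab_group_add \<Rightarrow> 'g) \<Rightarrow> ('g \<Rightarrow> 'g \<Rightarrow> 'g) \<Rightarrow> ('g \<Rightarrow> 'g) \<Rightarrow> 'g \<Rightarrow> bool" where
  "hermitian_symmetric_data sc br \<theta> U \<longleftrightarrow>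
     complex_simple_lie_algebra sc br \<and>
     involutive_automorphism sc br \<theta> \<and>
     mpart \<theta> \<noteq> {0} \<and>
     U \<in> kpart \<theta> \<and> (\<forall>x \<in> kpart \<theta>. br U x = 0) \<and>
     (\<forall>X \<in> mpart \<theta>. \<exists>Xp \<in> mplus sc br \<theta> U. \<exists>Xm \<in> mminus sc br \<theta> U. X = Xp + Xm)"

definition Jop :: "('g \<Rightarrow> 'g \<Rightarrow> 'g) \<Rightarrow> 'g \<Rightarrow> 'g \<Rightarrow> 'g" where
  "Jop br U Z = br U Z"

definition ad2 :: "('g \<Rightarrow> 'g \<Rightarrow> 'g) \<Rightarrow> 'g \<Rightarrow> 'g \<Rightarrow> 'g" where
  "ad2 br Z X = br Z (br Z X)"

end

theory Submission
  imports Defs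
begin

locale lie0 =
  fixes sc :: "complex \<Rightarrow> 'g::ab_group_add \<Rightarrow> 'g"
    and br :: "'g \<Rightarrow> 'g \<Rightarrow> 'g"
  assumes vs: "vector_space sc"
    and addR: "br x (y + z) = br x y + br x z"
    and addL: "br (y + z) x = br y x + br z x"
    and scR: "br x (sc c y) = sc c (br x y)"
    and scL: "br (sc c y) x = sc c (br y x)"
    and alt: "br x x = 0"
    and jac: "br x (br y z) + br y (br z x) + br z (br x y) = 0"
begin

interpretation V: vector_space sc by (rule vs)

lemma zeroR[simp]: "br x 0 = 0"
  using addR[of x 0 0] by simp
lemma zeroL[simp]: "br 0 x = 0"
  using addL[of 0 0 x] by simp
lemma negR: "br x (- y) = - br x y"
proof -
  have "br x y + br x (- y) = 0" using addR[of x y "-y"] by simp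
  then show ?thesis by (simp add: add_eq_0_iff2)
qed
lemma negL: "br (- y) x = - br y x"
proof -
  have "br y x + br (- y) x = 0" using addL[of y "-y" x] by simp
  then show ?thesis by (simp add: add_eq_0_iff2)
qed
lemma diffR: "br x (y - z) = br x y - br x z"
  using addR[of x y "-z"] negR by simp
lemma diffL: "br (y - z) x = br y x - br z x"
  using addL[of y "-z" x] negL by simp
lemma anti: "br y x = - br x y"
proof -
  have "br (x+y) (x+y) = br x x + br x y + (br y x + br y y)" by (simp only: addL addR add_ac)
  then have "br x y + br y x = 0" by (simp add: alt)
  then show ?thesis by (simp add: add_eq_0_iff2 add.commute)
qed
lemma deriv: "br a (br b c) = br (br a b) c + br b (br a c)"
proof -
  have j: "br a (br b c) + (br b (br c a) + br c (br a b)) = 0" using jac by (simp only: add.assoc)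
  have 1: "br b (br c a) = - br b (br a c)" using anti[of c a] negR by simp
  have 2: "br c (br a b) = - br (br a b) c" by (rule anti[of c "br a b"])
  have "br a (br b c) = - (br b (br c a) + br c (br a b))"
    using j by (rule add_eq_0_iff2[THEN iffD1])
  also have "\<dots> = br (br a b) c + br b (br a c)"
    unfolding 1 2 minus_add_distrib minus_minus by (rule add.commute)
  finally show ?thesis .
qed

lemma three0: "y + y + y = 0 \<Longrightarrow> (y::'g) = 0"
proof -
  assume h: "y + y + y = 0"
  have "sc 3 y = sc (1+1+1) y" by simp
  also have "\<dots> = y + y + y" by (simp only: V.scale_left_distrib V.scale_one)
  finally have "sc 3 y = 0" using h by simp
  then show ?thesis by simp
qed

lemma two0: "y + y = 0 \<Longrightarrow> (y::'g) = 0"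
proof -
  assume h: "y + y = 0"
  have "sc 2 y = sc (1+1) y" by simp
  also have "\<dots> = y + y" by (simp only: V.scale_left_distrib V.scale_one)
  finally have "sc 2 y = 0" using h by simp
  then show ?thesis by simp
qed

lemma key:
  assumes bx: "br B X = 0" and a3x: "br A (br A (br A X)) = 0"
    and a3b: "br A (br A (br A B)) = 0"
  shows "br A (br A (br B (br A X))) = br A (br B (br A (br A X)))"
proof -
  define H where "H = br A B"
  define K where "K = br A X"
  define C where "C = br A H"
  define V where "V = br A K"
  have AV: "br A V = 0" unfolding V_def K_def by (rule a3x)
  have "br A C = 0" unfolding C_def H_def by (rule a3b)
  then have CA: "br C A = 0" using anti[of C A] by simp
  have e1: "br A (br H K) = br C K + br H V" unfolding C_def V_def by (rule deriv)
  have "br C K = br (br C A) X + br A (br C X)" unfolding K_def by (rule deriv)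
  then have e2: "br C K = br A (br C X)" unfolding CA by simp
  have "br A (br B V) = br H V + br B (br A V)" unfolding H_def by (rule deriv)
  then have e3: "br H V = br A (br B V)" unfolding AV by simp
  have e4a: "br A (br B X) = br H X + br B K" unfolding H_def K_def by (rule deriv)
  have e4b: "br A (br H X) = br C X + br H K" unfolding C_def K_def by (rule deriv)
  have e4c: "br A (br B K) = br H K + br B V" unfolding H_def V_def by (rule deriv)
  have "0 = br A (br A (br B X))" unfolding bx by simp
  also have "\<dots> = br A (br H X) + br A (br B K)" unfolding e4a by (rule addR)
  also have "\<dots> = br C X + br H K + (br H K + br B V)" unfolding e4b e4c ..
  finally have e4: "br C X + br B V = - (br H K + br H K)"
    unfolding add_eq_0_iff2[symmetric] by (simp only: add_ac)
  have "br A (br H K) = br A (br C X) + br A (br B V)" unfolding e1 e2 e3 ..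
  also have "\<dots> = br A (br C X + br B V)" by (rule addR[symmetric])
  also have "\<dots> = - (br A (br H K) + br A (br H K))" unfolding e4 negR addR ..
  finally have "br A (br H K) + (br A (br H K) + br A (br H K)) = 0"
    by (rule add_eq_0_iff2[THEN iffD2])
  then have z: "br A (br H K) = 0"
    unfolding add.assoc[symmetric] by (rule three0)
  have "br A (br A (br B (br A X))) = br A (br H K) + br A (br B V)"
    unfolding K_def[symmetric] e4c by (rule addR)
  also have "\<dots> = br H V" unfolding z e3 by simp
  finally have l: "br A (br A (br B (br A X))) = br H V" .
  have r: "br A (br B (br A (br A X))) = br H V"
    using e3 unfolding V_def K_def by simp
  show ?thesis using l r by simp
qed

end

locale herm = lie0 sc br for sc :: "complex \<Rightarrow> 'g::ab_group_add \<Rightarrow> 'g" and br +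
  fixes th :: "'g \<Rightarrow> 'g" and U :: 'g
  assumes thadd: "th (x + y) = th x + th y"
    and thsc: "th (sc c x) = sc c (th x)"
    and thbr: "th (br x y) = br (th x) (th y)"
    and kU: "th x = x \<Longrightarrow> br U x = 0"
begin

interpretation V: vector_space sc by (rule vs)

definition gr where "gr c p x \<longleftrightarrow> br U x = sc c x \<and> th x = sc p x"

lemma gr_br: "gr c p x \<Longrightarrow> gr d q y \<Longrightarrow> gr (c+d) (p*q) (br x y)"
proof -
  assume a: "gr c p x" and b: "gr d q y"
  have "br U (br x y) = br (br U x) y + br x (br U y)" by (rule deriv)
  also have "\<dots> = br (sc c x) y + br x (sc d y)" using a b unfolding gr_def by simp
  also have "\<dots> = sc c (br x y) + sc d (br x y)" by (simp only: scL scR)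
  also have "\<dots> = sc (c+d) (br x y)" by (simp only: V.scale_left_distrib)
  finally have 1: "br U (br x y) = sc (c+d) (br x y)" .
  have "th (br x y) = br (sc p x) (sc q y)" using a b unfolding gr_def by (simp only: thbr)
  also have "\<dots> = sc (p*q) (br x y)" by (simp only: scL scR V.scale_scale mult.commute)
  finally show ?thesis using 1 unfolding gr_def by simp
qed

lemma gr_zero: "gr c 1 x \<Longrightarrow> c \<noteq> 0 \<Longrightarrow> x = 0"
proof -
  assume a: "gr c 1 x" and c: "c \<noteq> 0"
  have "th x = x" using a unfolding gr_def by simp
  then have "br U x = 0" by (rule kU)
  then have "sc c x = 0" using a unfolding gr_def by simp
  then show "x = 0" using c by simp
qed

lemma core:
  assumes gA: "gr c (-1) A" and gB: "gr (-c) (-1) B" and gX: "gr (-c) (-1) X" and c0: "c \<noteq> 0"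
  shows "ad2 br (A - B) (ad2 br (A + B) X) = ad2 br (A + B) (ad2 br (A - B) X)"
proof -
  have "gr (-c + -c) 1 (br B X)" using gr_br[OF gB gX] by simp
  then have bx: "br B X = 0" by (rule gr_zero) (use c0 in auto)
  have "gr c (-1) (br A (br A X))" using gr_br[OF gA gr_br[OF gA gX]] by simp
  then have "gr (c+c) 1 (br A (br A (br A X)))" using gr_br[OF gA] by fastforce
  then have a3x: "br A (br A (br A X)) = 0" by (rule gr_zero) (use c0 in auto)
  have "gr c (-1) (br A (br A B))" using gr_br[OF gA gr_br[OF gA gB]] by simp
  then have "gr (c+c) 1 (br A (br A (br A B)))" using gr_br[OF gA] by fastforce
  then have a3b: "br A (br A (br A B)) = 0" by (rule gr_zero) (use c0 in auto)
  have "gr (-c) (-1) (br B (br A X))" using gr_br[OF gB gr_br[OF gA gX]] by simp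
  then have "gr (-c + -c) 1 (br B (br B (br A X)))" using gr_br[OF gB] by fastforce
  then have b2: "br B (br B (br A X)) = 0" by (rule gr_zero) (use c0 in auto)
  have k: "br A (br A (br B (br A X))) = br A (br B (br A (br A X)))" by (rule key[OF bx a3x a3b])
  show ?thesis unfolding ad2_def
    apply (simp add: addL addR diffL diffR bx b2 a3x)
    using k by simp
qed

lemma ad2_neg: "ad2 br (- W) Y = ad2 br W Y"
  unfolding ad2_def by (simp add: negL negR)

lemma ad2_addR: "ad2 br W (Y1 + Y2) = ad2 br W Y1 + ad2 br W Y2"
  unfolding ad2_def by (simp add: addR)

lemma ad2_sc: "ad2 br (sc a W) Y = sc (a*a) (ad2 br W Y)"
  unfolding ad2_def by (simp add: scL scR)

end


theorem proposition4p2: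
  fixes sc :: "complex \<Rightarrow> 'g::ab_group_add \<Rightarrow> 'g"
    and br :: "'g \<Rightarrow> 'g \<Rightarrow> 'g"
    and \<theta> :: "'g \<Rightarrow> 'g"
    and U :: 'g
  assumes "hermitian_symmetric_data sc br \<theta> U"
    and "Z \<in> mpart \<theta>"
    and "X \<in> mpart \<theta>"
  shows "ad2 br (Jop br U Z) (ad2 br Z X) = ad2 br Z (ad2 br (Jop br U Z) X)"
proof -
  have H: "complex_lie_algebra sc br" "involutive_automorphism sc br \<theta>"
    "\<forall>x \<in> kpart \<theta>. br U x = 0"
    "\<forall>X \<in> mpart \<theta>. \<exists>Xp \<in> mplus sc br \<theta> U. \<exists>Xm \<in> mminus sc br \<theta> U. X = Xp + Xm"
    using assms(1) unfolding hermitian_symmetric_data_def complex_simple_lie_algebra_def by auto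
  have vs: "vector_space sc" using H(1) unfolding complex_lie_algebra_def by auto
  interpret V: vector_space sc by (rule vs)
  have lR: "\<And>x. Vector_Spaces.linear sc sc (br x)" and lL: "\<And>y. Vector_Spaces.linear sc sc (\<lambda>x. br x y)"
    and alt: "\<And>x. br x x = 0"
    and jac: "\<And>x y z. br x (br y z) + br y (br z x) + br z (br x y) = 0"
    using H(1) unfolding complex_lie_algebra_def by auto
  have lT: "Vector_Spaces.linear sc sc \<theta>" and thbr: "\<And>x y. \<theta> (br x y) = br (\<theta> x) (\<theta> y)"
    using H(2) unfolding involutive_automorphism_def by auto
  interpret herm sc br \<theta> U
  proof (intro herm.intro lie0.intro herm_axioms.intro)
    show "vector_space sc" by (rule vs)
    show "br x (y + z) = br x y + br x z" for x y z
      using lR[of x] unfolding Vector_Spaces.linear_iff by (elim conjE allE)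
    show "br (y + z) x = br y x + br z x" for x y z
      using lL[of x] unfolding Vector_Spaces.linear_iff by (elim conjE allE)
    show "br x (sc c y) = sc c (br x y)" for x c y
      using lR[of x] unfolding Vector_Spaces.linear_iff by (elim conjE allE)
    show "br (sc c y) x = sc c (br y x)" for c y x
      using lL[of x] unfolding Vector_Spaces.linear_iff by (elim conjE allE)
    show "\<And>x. br x x = 0" by (rule alt)
    show "\<And>x y z. br x (br y z) + br y (br z x) + br z (br x y) = 0" by (rule jac)
    show "\<theta> (x + y) = \<theta> x + \<theta> y" for x y
      using lT unfolding Vector_Spaces.linear_iff by (elim conjE allE)
    show "\<theta> (sc c x) = sc c (\<theta> x)" for c x
      using lT unfolding Vector_Spaces.linear_iff by (elim conjE allE)
    show "\<And>x y. \<theta> (br x y) = br (\<theta> x) (\<theta> y)" by (rule thbr)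
    show "\<And>x. \<theta> x = x \<Longrightarrow> br U x = 0" using H(3) unfolding kpart_def by auto
  qed
  obtain A B where A: "A \<in> mplus sc br \<theta> U" and B: "B \<in> mminus sc br \<theta> U" and Z: "Z = A + B"
    using H(4) assms(2) by blast
  obtain Xp Xm where Xp: "Xp \<in> mplus sc br \<theta> U" and Xm: "Xm \<in> mminus sc br \<theta> U" and X: "X = Xp + Xm"
    using H(4) assms(3) by blast
  have gp: "gr \<i> (-1) Y" if "Y \<in> mplus sc br \<theta> U" for Y
    using that unfolding gr_def mplus_def mpart_def by simp
  have gm: "gr (-\<i>) (-1) Y" if "Y \<in> mminus sc br \<theta> U" for Y
    using that unfolding gr_def mminus_def mpart_def by simp
  have gm': "gr (-(-\<i>)) (-1) Y" if "Y \<in> mplus sc br \<theta> U" for Y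
    using gp[OF that] by simp
  have c1: "ad2 br (A - B) (ad2 br (A + B) Xm) = ad2 br (A + B) (ad2 br (A - B) Xm)"
    by (rule core[OF gp[OF A] gm[OF B] gm[OF Xm]]) simp
  have c2: "ad2 br (B - A) (ad2 br (B + A) Xp) = ad2 br (B + A) (ad2 br (B - A) Xp)"
    by (rule core[OF gm[OF B] gm'[OF A] gm'[OF Xp]]) simp
  have BA: "B - A = - (A - B)" "B + A = A + B" by (simp_all add: add.commute)
  have c2': "ad2 br (A - B) (ad2 br (A + B) Xp) = ad2 br (A + B) (ad2 br (A - B) Xp)"
    using c2 unfolding BA ad2_neg .
  have main: "ad2 br (A - B) (ad2 br Z X) = ad2 br Z (ad2 br (A - B) X)"
    unfolding Z X ad2_addR using c1 c2' by simp
  have J: "Jop br U Z = sc \<i> (A - B)"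
    using A B unfolding Jop_def Z mplus_def mminus_def
    by (simp add: addR V.scale_right_diff_distrib)
  have negY: "ad2 br W (- Y) = - ad2 br W Y" for W Y
    unfolding ad2_def by (simp add: negR)
  show ?thesis
    unfolding J ad2_sc using main by (simp add: negY)
qed

end
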